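(* Let $n\ge 1$, $p\ge 2$, $k\ge 1$ be integers and $\sigma>0$. Let ${\bf X}\in\{0,1\}^{n\times p}$ have no zero column, with columns ${\bf x}_1,\dots,{\bf x}_p$. Let $T$ be a finite rooted tree with node set $V(T)$, let ${\bf A}\in\mathbb{R}^{p\times |V(T)|}$, and let $\mathcal{G}$ be a partition of $V(T)$ into nonempty groups. Assume: (i) every group $g\in\mathcal G$ has size $p_g\le 2^k-1$; (ii) $|\mathcal G|\le p$; (iii) for every $g\in\mathcal G$, all entries of the matrix ${\bf X}{\bf A}{\bf P}_g$ lie in $\{0,1\}$, where ${\bf P}_g$ is the $|V(T)|\times|V(T)|$ diagonal matrix with $({\bf P}_g)_{vv}=1$ if $v\in g$ and $0$ otherwise. Suppose ${\bf y}={\bf X}\boldsymbol\beta^*+\boldsymbol\varepsilon$ with $\boldsymbol\varepsilon\sim N_n({\bf 0},\sigma^2{\bf I}_n)$, where $\boldsymbol\beta^*={\bf A}\boldsymbol\gamma^*$ for some $\boldsymbol\gamma^*\in\mathbb{R}^{|V(T)|}$. Fix $\alpha\in[0,1]$, weights $\tilde w_j=\|{\bf x}_j\|/\sqrt n$ ($1\le j\le p$) and $w_g=\sqrt{p_g/(2^k-1)}$ ($g\in\mathcal G$), and a tuning parameter $\lambda\ge 4\sqrt{2^k-1}\,\sigma\sqrt{\log p/n}$. Let $(\hat{\boldsymbol\beta},\hat{\boldsymbol\gamma})$ be any minimizer, over all pairs $(\boldsymbol\beta,\boldsymbol\gamma)\in\mathbb{R}^p\times\mathbb{R}^{|V(T)|}$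 with $\boldsymbol\beta={\bf A}\boldsymbol\gamma$, of $$\frac{1}{2n}\|{\bf y}-{\bf X}\boldsymbol\beta\|^2+\lambda\Big[(1-\alpha)\sum_{j=1}^p\tilde w_j|\beta_j|+\alpha\sum_{g\in\mathcal G}w_g\|\boldsymbol\gamma_g\|\Big],$$ where $\boldsymbol\gamma_g$ is the subvector of $\boldsymbol\gamma$ indexed by $g$. Then, with probability at least $1-\frac1p-\frac{2}{p^2}$, $$\frac1n\|{\bf X}\hat{\boldsymbol\beta}-{\bf X}\boldsymbol\beta^*\|^2\le 4\lambda\Big[(1-\alpha)\sum_{j=1}^p\tilde w_j|\beta^*_j|+\alpha\sum_{g\in\mathcal G}w_g\|\boldsymbol\gamma^*_g\|\Big].$$
   Context: This is the prediction error bound for the tree-guided feature selection and logic aggregation (TSLA) estimator without intercept. In the paper's construction: the original binary features are the $p_0$ leaves of a hierarchy tree in which every internal node has at most $k$ children. The tree is expanded by adding, for each internal node, "derived" nodes representing products (logical "and") of subsets of its children's (or-aggregated) features; the expanded tree $T$ has $p$ leaves, corresponding to the columns of the expanded binary design ${\bf X}$ (zero columns dropped), and every internal node of $T$ has at most $2^k-1$ children. Each node $u$ of $T$ carries a coefficient $\gamma_u$; a native leaf $u$ has $\beta_u=\sum_{v\in \mathrm{Anc}(u)\cup\{u\}}\gamma_v$ and a derived leaf built from an aggregation set $\mathcal S$ has $\beta_u=(-1)^{|\mathcal S|-1}\sum_{v\in\mathrm{Anc}(u)\cup\{u\}}\gamma_v$, which defines the linear map $\boldsymbol\beta={\bf A}\boldsymbol\gamma$.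 The partition is $\mathcal G=\{\{\text{root}\}\}\cup\{C(u): u \text{ internal node of } T\}$ with $C(u)$ the children of $u$. For this construction hypotheses (i)–(iii) hold (each column of ${\bf X}{\bf A}{\bf P}_g$ is an or-aggregation of features, hence binary). Norms $\|\cdot\|$ are Euclidean. *)

theory Defs
  imports "HOL-Probability.Probability"
begin

text \<open>Vectors in R^n are functions nat => real, meaningful on indices {..<n};
  matrices are functions of two indices. Tree nodes have an abstract type 'v,
  the node set is V.\<close>

definition rooted_tree :: "'v set \<Rightarrow> 'v \<Rightarrow> ('v \<Rightarrow> 'v) \<Rightarrow> bool" where
  "rooted_tree V r par \<longleftrightarrow> finite V \<and> r \<in> V \<and> par ` (V - {r}) \<subseteq> V \<and>
     (\<forall>v\<in>V. \<exists>m. (par ^^ m) v = r)"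

definition is_partition :: "'v set set \<Rightarrow> 'v set \<Rightarrow> bool" where
  "is_partition G V \<longleftrightarrow> (\<forall>g\<in>G. g \<noteq> {} \<and> g \<subseteq> V) \<and> \<Union>G = V \<and>
     (\<forall>g\<in>G. \<forall>h\<in>G. g \<noteq> h \<longrightarrow> g \<inter> h = {})"

definition linmap :: "'v set \<Rightarrow> (nat \<Rightarrow> 'v \<Rightarrow> real) \<Rightarrow> ('v \<Rightarrow> real) \<Rightarrow> nat \<Rightarrow> real" where
  "linmap V A \<gamma> j = (\<Sum>v\<in>V. A j v * \<gamma> v)"

definition col_norm :: "nat \<Rightarrow> (nat \<Rightarrow> nat \<Rightarrow> real) \<Rightarrow> nat \<Rightarrow> real" where
  "col_norm n X j = sqrt (\<Sum>i<n. (X i j)\<^sup>2)"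

definition tsla_penalty :: "nat \<Rightarrow> nat \<Rightarrow> nat \<Rightarrow> (nat \<Rightarrow> nat \<Rightarrow> real) \<Rightarrow> 'v set set \<Rightarrow> real
    \<Rightarrow> (nat \<Rightarrow> real) \<Rightarrow> ('v \<Rightarrow> real) \<Rightarrow> real" where
  "tsla_penalty n p k X G \<alpha> \<beta> \<gamma> =
     (1 - \<alpha>) * (\<Sum>j<p. (col_norm n X j / sqrt (real n)) * \<bar>\<beta> j\<bar>)
     + \<alpha> * (\<Sum>g\<in>G. sqrt (real (card g) / (2 ^ k - 1)) * sqrt (\<Sum>v\<in>g. (\<gamma> v)\<^sup>2))"

definition tsla_objective :: "nat \<Rightarrow> nat \<Rightarrow> nat \<Rightarrow> (nat \<Rightarrow> nat \<Rightarrow> real) \<Rightarrow> 'v set set \<Rightarrow> real \<Rightarrow> real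
    \<Rightarrow> (nat \<Rightarrow> real) \<Rightarrow> (nat \<Rightarrow> real) \<Rightarrow> ('v \<Rightarrow> real) \<Rightarrow> real" where
  "tsla_objective n p k X G \<alpha> lam y \<beta> \<gamma> =
     1 / (2 * real n) * (\<Sum>i<n. (y i - (\<Sum>j<p. X i j * \<beta> j))\<^sup>2)
     + lam * tsla_penalty n p k X G \<alpha> \<beta> \<gamma>"

definition gaussian_vec :: "nat \<Rightarrow> real \<Rightarrow> (nat \<Rightarrow> real) measure" where
  "gaussian_vec n \<sigma> = PiM {..<n} (\<lambda>_. density lborel (normal_density 0 \<sigma>))"

end

theory Submission
  imports Defs
begin


lemma gauss_mgf:
  fixes \<tau> a :: real
  assumes tp: "\<tau> > 0" and a0: "0 \<le> a" and small: "2*a*\<tau>\<^sup>2 \<le> 1/2"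
  shows "(\<integral>\<^sup>+x. ennreal (normal_density 0 \<tau> x * exp (a*x\<^sup>2)) \<partial>lborel) \<le> ennreal (sqrt 2)"
proof -
  define q where "q = 1 - 2*a*\<tau>\<^sup>2"
  have q: "q \<ge> 1/2" using small by (simp add: q_def)
  define \<rho> where "\<rho> = \<tau> / sqrt q"
  have rp: "\<rho> > 0" using tp q by (simp add: \<rho>_def)
  define K where "K = 1 / sqrt q"
  have pw: "normal_density 0 \<tau> x * exp (a*x\<^sup>2) = K * normal_density 0 \<rho> x" for x
  proof -
    have e: "-(x - 0)\<^sup>2/ (2 * \<tau>\<^sup>2) + a*x\<^sup>2 = -(x - 0)\<^sup>2/ (2 * \<rho>\<^sup>2)"
      using tp q by (simp add: \<rho>_def q_def power_divide field_simps)
    have s: "sqrt (2 * pi * \<rho>\<^sup>2) = sqrt (2*pi*\<tau>\<^sup>2) / sqrt q"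
      using tp q by (simp add: \<rho>_def power_divide real_sqrt_divide real_sqrt_mult)
    show ?thesis
      unfolding normal_density_def
      using tp q s e[symmetric] by (simp add: K_def mult_exp_exp field_simps)
  qed
  have "(\<integral>\<^sup>+x. ennreal (normal_density 0 \<tau> x * exp (a*x\<^sup>2)) \<partial>lborel)
      = (\<integral>\<^sup>+x. ennreal K * ennreal (normal_density 0 \<rho> x) \<partial>lborel)"
    using q by (intro nn_integral_cong) (simp add: pw K_def ennreal_mult[symmetric])
  also have "\<dots> = ennreal K * (\<integral>\<^sup>+x. ennreal (normal_density 0 \<rho> x) \<partial>lborel)"
    by (simp add: nn_integral_cmult)
  also have "(\<integral>\<^sup>+x. ennreal (normal_density 0 \<rho> x) \<partial>lborel) = 1"
    using rp by (subst nn_integral_eq_integral) (auto simp: integrable_normal_density integral_normal_density)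
  also have "K \<le> sqrt 2"
  proof -
    have "sqrt q \<ge> sqrt (1/2)" using q by simp
    then have "1 / sqrt q \<le> 1 / sqrt (1/2)" using q
      by (intro divide_left_mono) auto
    also have "1 / sqrt (1/2) = sqrt (2::real)" by (simp add: real_sqrt_divide)
    finally show ?thesis by (simp add: K_def)
  qed
  then have "ennreal K * 1 \<le> ennreal (sqrt 2)" by simp
  finally show ?thesis .
qed



abbreviation "GN \<sigma> \<equiv> density lborel (normal_density 0 \<sigma>)"

lemma gv_prob: "\<sigma> > 0 \<Longrightarrow> prob_space (gaussian_vec n \<sigma>)"
  unfolding gaussian_vec_def by (intro prob_space_PiM prob_space_normal_density)

lemma gv_comp_meas: "i < n \<Longrightarrow> (\<lambda>\<omega>. \<omega> i) \<in> borel_measurable (gaussian_vec n \<sigma>)"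
proof -
  assume i: "i < n"
  have "measurable (gaussian_vec n \<sigma>) (GN \<sigma>) = borel_measurable (gaussian_vec n \<sigma>)"
    by (rule measurable_cong_sets) auto
  then show ?thesis unfolding gaussian_vec_def
    using measurable_component_singleton[of i "{..<n}" "\<lambda>_. GN \<sigma>"] i
    by (simp add: gaussian_vec_def)
qed

lemma gv_lin_meas: "(\<lambda>\<omega>. \<Sum>i<n. c i * \<omega> i) \<in> borel_measurable (gaussian_vec n \<sigma>)"
  by (intro borel_measurable_sum borel_measurable_times borel_measurable_const gv_comp_meas) auto

lemma gv_comp_distr:
  assumes "i < n" "\<sigma> > 0" "sets N = sets borel"
  shows "distr (gaussian_vec n \<sigma>) N (\<lambda>\<omega>. \<omega> i) = GN \<sigma>"
proof -
  have "distr (gaussian_vec n \<sigma>) N (\<lambda>\<omega>. \<omega> i) = distr (gaussian_vec n \<sigma>) (GN \<sigma>) (\<lambda>\<omega>. \<omega> i)"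
    using assms(3) by (intro distr_cong) auto
  also have "\<dots> = GN \<sigma>" unfolding gaussian_vec_def
    using assms by (intro distr_PiM_component prob_space_normal_density) auto
  finally show ?thesis .
qed

lemma gv_comp_dist:
  assumes "i < n" "\<sigma> > 0"
  shows "distributed (gaussian_vec n \<sigma>) lborel (\<lambda>\<omega>. \<omega> i) (normal_density 0 \<sigma>)"
  unfolding distributed_def
  using gv_comp_distr[OF assms, of lborel] gv_comp_meas[OF assms(1), of \<sigma>]
  by (simp add: measurable_lborel2)



lemma gv_indep:
  assumes "n > 0" "\<sigma> > 0"
  shows "prob_space.indep_vars (gaussian_vec n \<sigma>) (\<lambda>_. borel) (\<lambda>i \<omega>. \<omega> i) {..<n}"
proof -
  interpret P: prob_space "gaussian_vec n \<sigma>" by (rule gv_prob) fact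
  have rv: "(\<lambda>\<omega>::nat\<Rightarrow>real. \<omega> i) \<in> borel_measurable (gaussian_vec n \<sigma>)" if "i \<in> {..<n}" for i
    using gv_comp_meas[of i n \<sigma>] that by simp
  have d: "distr (gaussian_vec n \<sigma>) borel (\<lambda>\<omega>. \<omega> i) = GN \<sigma>" if "i \<in> {..<n}" for i
    using gv_comp_distr[of i n \<sigma> borel] that assms by auto
  have "distr (gaussian_vec n \<sigma>) (\<Pi>\<^sub>M i\<in>{..<n}. borel) (\<lambda>x. \<lambda>i\<in>{..<n}. x i)
      = distr (gaussian_vec n \<sigma>) (gaussian_vec n \<sigma>) (\<lambda>x. x)"
  proof (rule distr_cong)
    show "sets (\<Pi>\<^sub>M i\<in>{..<n}. borel) = sets (gaussian_vec n \<sigma>)"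
      unfolding gaussian_vec_def by (rule sets_PiM_cong) auto
    fix x assume "x \<in> space (gaussian_vec n \<sigma>)"
    then show "(\<lambda>i\<in>{..<n}. x i) = x"
      unfolding gaussian_vec_def by (auto simp: space_PiM PiE_def extensional_def restrict_def)
  qed simp
  also have "\<dots> = gaussian_vec n \<sigma>" by simp
  also have "\<dots> = (\<Pi>\<^sub>M i\<in>{..<n}. distr (gaussian_vec n \<sigma>) borel (\<lambda>\<omega>. \<omega> i))"
  proof -
    have "(\<Pi>\<^sub>M i\<in>{..<n}. distr (gaussian_vec n \<sigma>) borel (\<lambda>\<omega>. \<omega> i)) = (\<Pi>\<^sub>M i\<in>{..<n}. GN \<sigma>)"
      by (rule PiM_cong) (auto simp: d)
    then show ?thesis by (simp add: gaussian_vec_def)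
  qed
  finally have eq: "distr (gaussian_vec n \<sigma>) (\<Pi>\<^sub>M i\<in>{..<n}. borel) (\<lambda>x. \<lambda>i\<in>{..<n}. x i) =
     (\<Pi>\<^sub>M i\<in>{..<n}. distr (gaussian_vec n \<sigma>) borel (\<lambda>\<omega>. \<omega> i))" .
  show ?thesis
    using assms eq by (subst P.indep_vars_iff_distr_eq_PiM') (auto simp: rv)
qed



lemma gv_mgf:
  assumes sp: "\<sigma> > 0" and s: "s > 0" and cs: "(\<Sum>i<n. (c i)\<^sup>2) \<le> s"
  shows "nn_integral (gaussian_vec n \<sigma>) (\<lambda>\<omega>. ennreal (exp ((\<Sum>i<n. c i * \<omega> i)\<^sup>2 / (4 * \<sigma>\<^sup>2 * s)))) \<le> ennreal (sqrt 2)"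
proof -
  interpret P: prob_space "gaussian_vec n \<sigma>" by (rule gv_prob) fact
  define I where "I = {i\<in>{..<n}. c i \<noteq> 0}"
  have fI: "finite I" by (simp add: I_def)
  have lin: "(\<Sum>i<n. c i * \<omega> i) = (\<Sum>i\<in>I. c i * \<omega> i)" for \<omega> :: "nat \<Rightarrow> real"
    by (rule sum.mono_neutral_right) (auto simp: I_def)
  have lin2: "(\<Sum>i<n. (c i)\<^sup>2) = (\<Sum>i\<in>I. (c i)\<^sup>2)"
    by (rule sum.mono_neutral_right) (auto simp: I_def)
  show ?thesis
  proof (cases "I = {}")
    case True
    then have "nn_integral (gaussian_vec n \<sigma>) (\<lambda>\<omega>. ennreal (exp ((\<Sum>i<n. c i * \<omega> i)\<^sup>2 / (4 * \<sigma>\<^sup>2 * s))))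
        = nn_integral (gaussian_vec n \<sigma>) (\<lambda>\<omega>. 1)" by (simp add: lin)
    also have "\<dots> = 1" by (simp add: P.emeasure_space_1)
    finally show ?thesis by simp
  next
    case False
    then have n0: "n > 0" by (auto simp: I_def)
    have ind: "P.indep_vars (\<lambda>_. borel) (\<lambda>i \<omega>. c i * \<omega> i) I"
    proof -
      have "P.indep_vars (\<lambda>_. borel) (\<lambda>i \<omega>. c i * \<omega> i) {..<n}"
        using P.indep_vars_compose2[OF gv_indep[OF n0 sp], of "\<lambda>i x. c i * x" "\<lambda>_. borel"]
        by simp
      then show ?thesis by (rule P.indep_vars_subset) (auto simp: I_def)
    qed
    have dist: "distributed (gaussian_vec n \<sigma>) lborel (\<lambda>\<omega>. c i * \<omega> i) (normal_density 0 (\<bar>c i\<bar> * \<sigma>))"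
      if "i \<in> I" for i
      using P.normal_density_affine[OF gv_comp_dist[of i n \<sigma>] sp, of "c i" 0] that sp
      by (simp add: I_def)
    define \<tau> where "\<tau> = sqrt (\<Sum>i\<in>I. (\<bar>c i\<bar> * \<sigma>)\<^sup>2)"
    have D: "distributed (gaussian_vec n \<sigma>) lborel (\<lambda>\<omega>. \<Sum>i\<in>I. c i * \<omega> i) (normal_density 0 \<tau>)"
      using P.sum_indep_normal[OF fI False ind, of "\<lambda>i. \<bar>c i\<bar> * \<sigma>" "\<lambda>_. 0"] dist sp
      by (simp add: \<tau>_def I_def)
    have t2: "\<tau>\<^sup>2 = \<sigma>\<^sup>2 * (\<Sum>i\<in>I. (c i)\<^sup>2)"
      by (simp add: \<tau>_def sum_nonneg power_mult_distrib sum_distrib_left mult.commute)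
    have tp: "\<tau> > 0" unfolding \<tau>_def using False fI sp
      by (intro real_sqrt_gt_zero sum_pos) (auto simp: I_def)
    define a where "a = 1 / (4 * \<sigma>\<^sup>2 * s)"
    have a0: "a \<ge> 0" using s by (simp add: a_def)
    have small: "2*a*\<tau>\<^sup>2 \<le> 1/2"
    proof -
      have "2*a*\<tau>\<^sup>2 = (\<Sum>i\<in>I. (c i)\<^sup>2) / (2* s)" using sp s by (simp add: a_def t2 field_simps)
      also have "\<dots> \<le> s / (2* s)" using cs lin2 s by (intro divide_right_mono) auto
      also have "\<dots> = 1/2" using s by simp
      finally show ?thesis .
    qed
    have "nn_integral (gaussian_vec n \<sigma>) (\<lambda>\<omega>. ennreal (exp ((\<Sum>i<n. c i * \<omega> i)\<^sup>2 / (4 * \<sigma>\<^sup>2 * s))))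
        = nn_integral (gaussian_vec n \<sigma>) (\<lambda>\<omega>. (\<lambda>x. ennreal (exp (a * x\<^sup>2))) (\<Sum>i\<in>I. c i * \<omega> i))"
      by (simp add: lin a_def)
    also have "\<dots> = nn_integral lborel (\<lambda>x. ennreal (normal_density 0 \<tau> x) * ennreal (exp (a * x\<^sup>2)))"
      by (rule distributed_nn_integral[OF D, symmetric]) simp
    also have "\<dots> = (\<integral>\<^sup>+x. ennreal (normal_density 0 \<tau> x * exp (a * x\<^sup>2)) \<partial>lborel)"
      by (simp add: ennreal_mult)
    also have "\<dots> \<le> ennreal (sqrt 2)" by (rule gauss_mgf[OF tp a0 small])
    finally show ?thesis .
  qed
qed



lemma cross1: fixes w b :: "nat \<Rightarrow> real" shows "(\<Sum>i<n. w i * (\<Sum>j<p. X i j * b j)) = (\<Sum>j<p. b j * (\<Sum>i<n. X i j * w i))"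
proof -
  have "(\<Sum>i<n. w i * (\<Sum>j<p. X i j * b j)) = (\<Sum>i<n. \<Sum>j<p. b j * (X i j * w i))"
    by (simp add: sum_distrib_left mult_ac)
  also have "\<dots> = (\<Sum>j<p. \<Sum>i<n. b j * (X i j * w i))" by (rule sum.swap)
  also have "\<dots> = (\<Sum>j<p. b j * (\<Sum>i<n. X i j * w i))" by (simp add: sum_distrib_left)
  finally show ?thesis .
qed

lemma cross2: fixes w :: "nat \<Rightarrow> real" and c :: "'v \<Rightarrow> real" shows "(\<Sum>i<n. w i * (\<Sum>j<p. X i j * (\<Sum>v\<in>V. A j v * c v)))
   = (\<Sum>v\<in>V. c v * (\<Sum>i<n. (\<Sum>j<p. X i j * A j v) * w i))"
proof -
  have "(\<Sum>i<n. w i * (\<Sum>j<p. X i j * (\<Sum>v\<in>V. A j v * c v)))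
      = (\<Sum>i<n. \<Sum>j<p. \<Sum>v\<in>V. c v * (X i j * A j v * w i))"
    by (simp add: sum_distrib_left mult_ac)
  also have "\<dots> = (\<Sum>i<n. \<Sum>v\<in>V. \<Sum>j<p. c v * (X i j * A j v * w i))"
    by (simp add: sum.swap[of _ "{..<p}"])
  also have "\<dots> = (\<Sum>v\<in>V. \<Sum>i<n. \<Sum>j<p. c v * (X i j * A j v * w i))"
    by (rule sum.swap)
  also have "\<dots> = (\<Sum>v\<in>V. c v * (\<Sum>i<n. (\<Sum>j<p. X i j * A j v) * w i))"
    by (simp add: sum_distrib_left sum_distrib_right mult_ac)
  finally show ?thesis .
qed

lemma det_cross:
  fixes w b :: "nat \<Rightarrow> real" and c :: "'v \<Rightarrow> real"
  assumes finV: "finite V" and part: "is_partition G V" and n0: "n > 0" and lam0: "lam \<ge> 0"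
    and a0: "0 \<le> \<alpha>" and a1: "\<alpha> \<le> 1"
    and Hj: "\<forall>j<p. \<bar>\<Sum>i<n. X i j * w i\<bar> \<le> lam * real n * (col_norm n X j / sqrt (real n))"
    and Hg: "\<forall>g\<in>G. sqrt (\<Sum>v\<in>g. (\<Sum>i<n. (\<Sum>j<p. X i j * A j v) * w i)\<^sup>2)
               \<le> lam * real n * sqrt (real (card g) / (2 ^ k - 1))"
    and lin: "\<forall>j<p. b j = linmap V A c j"
  shows "(\<Sum>i<n. w i * (\<Sum>j<p. X i j * b j)) \<le> lam * real n * tsla_penalty n p k X G \<alpha> b c"
proof -
  define S where "S = (\<Sum>i<n. w i * (\<Sum>j<p. X i j * b j))"
  define W where "W v = (\<Sum>i<n. (\<Sum>j<p. X i j * A j v) * w i)" for v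
  define P1 where "P1 = (\<Sum>j<p. (col_norm n X j / sqrt (real n)) * \<bar>b j\<bar>)"
  define P2 where "P2 = (\<Sum>g\<in>G. sqrt (real (card g) / (2 ^ k - 1)) * sqrt (\<Sum>v\<in>g. (c v)\<^sup>2))"
  have S1: "S \<le> lam * real n * P1"
  proof -
    have "S = (\<Sum>j<p. b j * (\<Sum>i<n. X i j * w i))" unfolding S_def by (rule cross1)
    also have "\<dots> \<le> (\<Sum>j<p. \<bar>b j\<bar> * (lam * real n * (col_norm n X j / sqrt (real n))))"
    proof (rule sum_mono)
      fix j assume "j \<in> {..<p}"
      then have h: "\<bar>\<Sum>i<n. X i j * w i\<bar> \<le> lam * real n * (col_norm n X j / sqrt (real n))"
        using Hj by auto
      have "b j * (\<Sum>i<n. X i j * w i) \<le> \<bar>b j\<bar> * \<bar>\<Sum>i<n. X i j * w i\<bar>"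
        by (metis abs_ge_self abs_mult)
      also have "\<dots> \<le> \<bar>b j\<bar> * (lam * real n * (col_norm n X j / sqrt (real n)))"
        by (rule mult_left_mono[OF h]) simp
      finally show "b j * (\<Sum>i<n. X i j * w i) \<le> \<bar>b j\<bar> * (lam * real n * (col_norm n X j / sqrt (real n)))" .
    qed
    also have "\<dots> = lam * real n * P1" unfolding P1_def
      by (simp add: sum_distrib_left mult_ac)
    finally show ?thesis .
  qed
  have S2: "S \<le> lam * real n * P2"
  proof -
    have fG: "finite G" using part finV unfolding is_partition_def
      by (metis finite_UnionD)
    have fg: "\<forall>g\<in>G. finite g" using part finV unfolding is_partition_def
      by (meson finite_subset)
    have disj: "\<forall>g\<in>G. \<forall>h\<in>G. g \<noteq> h \<longrightarrow> g \<inter> h = {}" using part unfolding is_partition_def by blast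
    have UV: "\<Union>G = V" using part unfolding is_partition_def by blast
    have "S = (\<Sum>i<n. w i * (\<Sum>j<p. X i j * (\<Sum>v\<in>V. A j v * c v)))"
      unfolding S_def using lin by (intro sum.cong refl arg_cong2[where f="(*)"]) (auto simp: linmap_def)
    also have "\<dots> = (\<Sum>v\<in>V. c v * W v)" unfolding W_def by (rule cross2)
    also have "\<dots> = (\<Sum>g\<in>G. \<Sum>v\<in>g. c v * W v)"
      using sum.Union_disjoint[OF fg disj, of "\<lambda>v. c v * W v"] UV by simp
    also have "\<dots> \<le> (\<Sum>g\<in>G. L2_set c g * L2_set W g)"
    proof (rule sum_mono)
      fix g assume "g \<in> G"
      have "(\<Sum>v\<in>g. c v * W v) \<le> (\<Sum>v\<in>g. \<bar>c v\<bar> * \<bar>W v\<bar>)"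
        by (rule sum_mono) (metis abs_ge_self abs_mult)
      also have "\<dots> \<le> L2_set c g * L2_set W g" by (rule L2_set_mult_ineq)
      finally show "(\<Sum>v\<in>g. c v * W v) \<le> L2_set c g * L2_set W g" .
    qed
    also have "\<dots> \<le> (\<Sum>g\<in>G. L2_set c g * (lam * real n * sqrt (real (card g) / (2 ^ k - 1))))"
    proof (rule sum_mono)
      fix g assume "g \<in> G"
      then have "L2_set W g \<le> lam * real n * sqrt (real (card g) / (2 ^ k - 1))"
        using Hg by (simp add: L2_set_def W_def)
      then show "L2_set c g * L2_set W g \<le> L2_set c g * (lam * real n * sqrt (real (card g) / (2 ^ k - 1)))"
        by (rule mult_left_mono) (simp add: L2_set_def sum_nonneg)
    qed
    also have "\<dots> = lam * real n * P2" unfolding P2_def L2_set_def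
      by (simp add: sum_distrib_left mult_ac)
    finally show ?thesis .
  qed
  have "S = (1 - \<alpha>) * S + \<alpha> * S" by (simp add: algebra_simps)
  also have "\<dots> \<le> (1 - \<alpha>) * (lam * real n * P1) + \<alpha> * (lam * real n * P2)"
    using S1 S2 a0 a1 by (intro add_mono mult_left_mono) auto
  also have "\<dots> = lam * real n * tsla_penalty n p k X G \<alpha> b c"
    unfolding tsla_penalty_def P1_def P2_def by (simp add: algebra_simps)
  finally show ?thesis unfolding S_def .
qed



lemma gv_int:
  assumes sp: "\<sigma> > 0" and s: "s > 0" and cs: "(\<Sum>i<n. (c i)\<^sup>2) \<le> s"
  shows "integrable (gaussian_vec n \<sigma>) (\<lambda>\<omega>. exp ((\<Sum>i<n. c i * \<omega> i)\<^sup>2 / (4 * \<sigma>\<^sup>2 * s)))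
    \<and> integral\<^sup>L (gaussian_vec n \<sigma>) (\<lambda>\<omega>. exp ((\<Sum>i<n. c i * \<omega> i)\<^sup>2 / (4 * \<sigma>\<^sup>2 * s))) \<le> sqrt 2"
proof -
  let ?f = "\<lambda>\<omega>. exp ((\<Sum>i<n. c i * \<omega> i)\<^sup>2 / (4 * \<sigma>\<^sup>2 * s))"
  have m: "?f \<in> borel_measurable (gaussian_vec n \<sigma>)"
  proof -
    have "(\<lambda>x::real. exp (x\<^sup>2 / (4 * \<sigma>\<^sup>2 * s))) \<in> borel_measurable borel" by measurable
    from measurable_compose[OF gv_lin_meas this] show ?thesis .
  qed
  have nn: "nn_integral (gaussian_vec n \<sigma>) (\<lambda>\<omega>. ennreal (?f \<omega>)) \<le> ennreal (sqrt 2)"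
    by (rule gv_mgf[OF sp s cs])
  have int: "integrable (gaussian_vec n \<sigma>) ?f"
    using nn by (intro integrableI_nonneg m) (auto simp: top_unique intro: le_less_trans)
  have "ennreal (integral\<^sup>L (gaussian_vec n \<sigma>) ?f) = nn_integral (gaussian_vec n \<sigma>) (\<lambda>\<omega>. ennreal (?f \<omega>))"
    by (rule nn_integral_eq_integral[OF int, symmetric]) auto
  with nn have "ennreal (integral\<^sup>L (gaussian_vec n \<sigma>) ?f) \<le> ennreal (sqrt 2)" by simp
  then have "integral\<^sup>L (gaussian_vec n \<sigma>) ?f \<le> sqrt 2" by (simp add: ennreal_le_iff)
  with int show ?thesis by simp
qed

lemma pen_tri:
  assumes "0 \<le> \<alpha>" "\<alpha> \<le> 1"
  shows "tsla_penalty n p k X G \<alpha> (\<lambda>j. b1 j - b2 j) (\<lambda>v. c1 v - c2 v)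
     \<le> tsla_penalty n p k X G \<alpha> b1 c1 + tsla_penalty n p k X G \<alpha> b2 c2"
proof -
  have A: "(\<Sum>j<p. (col_norm n X j / sqrt (real n)) * \<bar>b1 j - b2 j\<bar>)
     \<le> (\<Sum>j<p. (col_norm n X j / sqrt (real n)) * \<bar>b1 j\<bar>) + (\<Sum>j<p. (col_norm n X j / sqrt (real n)) * \<bar>b2 j\<bar>)"
    unfolding sum.distrib[symmetric]
  proof (rule sum_mono)
    fix j
    have w: "col_norm n X j / sqrt (real n) \<ge> 0" unfolding col_norm_def
      by (intro divide_nonneg_nonneg real_sqrt_ge_zero sum_nonneg) auto
    have "(col_norm n X j / sqrt (real n)) * \<bar>b1 j - b2 j\<bar> \<le> (col_norm n X j / sqrt (real n)) * (\<bar>b1 j\<bar> + \<bar>b2 j\<bar>)"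
      by (rule mult_left_mono[OF abs_triangle_ineq4 w])
    then show "(col_norm n X j / sqrt (real n)) * \<bar>b1 j - b2 j\<bar> \<le> (col_norm n X j / sqrt (real n)) * \<bar>b1 j\<bar> + (col_norm n X j / sqrt (real n)) * \<bar>b2 j\<bar>"
      by (simp add: distrib_left)
  qed
  have B: "(\<Sum>g\<in>G. sqrt (real (card g) / (2 ^ k - 1)) * sqrt (\<Sum>v\<in>g. (c1 v - c2 v)\<^sup>2))
     \<le> (\<Sum>g\<in>G. sqrt (real (card g) / (2 ^ k - 1)) * sqrt (\<Sum>v\<in>g. (c1 v)\<^sup>2))
      + (\<Sum>g\<in>G. sqrt (real (card g) / (2 ^ k - 1)) * sqrt (\<Sum>v\<in>g. (c2 v)\<^sup>2))"
    unfolding sum.distrib[symmetric]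
  proof (rule sum_mono)
    fix g :: "'a set"
    have t: "L2_set (\<lambda>v. c1 v + (- c2 v)) g \<le> L2_set c1 g + L2_set (\<lambda>v. - c2 v) g"
      by (rule L2_set_triangle_ineq)
    have "sqrt (\<Sum>v\<in>g. (c1 v - c2 v)\<^sup>2) \<le> sqrt (\<Sum>v\<in>g. (c1 v)\<^sup>2) + sqrt (\<Sum>v\<in>g. (c2 v)\<^sup>2)"
      using t by (simp add: L2_set_def)
    then have "sqrt (real (card g) / (2 ^ k - 1)) * sqrt (\<Sum>v\<in>g. (c1 v - c2 v)\<^sup>2)
       \<le> sqrt (real (card g) / (2 ^ k - 1)) * (sqrt (\<Sum>v\<in>g. (c1 v)\<^sup>2) + sqrt (\<Sum>v\<in>g. (c2 v)\<^sup>2))"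
      by (rule mult_left_mono) (simp add: one_le_power)
    then show "sqrt (real (card g) / (2 ^ k - 1)) * sqrt (\<Sum>v\<in>g. (c1 v - c2 v)\<^sup>2)
       \<le> sqrt (real (card g) / (2 ^ k - 1)) * sqrt (\<Sum>v\<in>g. (c1 v)\<^sup>2) + sqrt (real (card g) / (2 ^ k - 1)) * sqrt (\<Sum>v\<in>g. (c2 v)\<^sup>2)"
      by (simp add: algebra_simps)
  qed
  have "(1 - \<alpha>) * (\<Sum>j<p. (col_norm n X j / sqrt (real n)) * \<bar>b1 j - b2 j\<bar>)
       + \<alpha> * (\<Sum>g\<in>G. sqrt (real (card g) / (2 ^ k - 1)) * sqrt (\<Sum>v\<in>g. (c1 v - c2 v)\<^sup>2))
     \<le> (1 - \<alpha>) * ((\<Sum>j<p. (col_norm n X j / sqrt (real n)) * \<bar>b1 j\<bar>) + (\<Sum>j<p. (col_norm n X j / sqrt (real n)) * \<bar>b2 j\<bar>))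
       + \<alpha> * ((\<Sum>g\<in>G. sqrt (real (card g) / (2 ^ k - 1)) * sqrt (\<Sum>v\<in>g. (c1 v)\<^sup>2))
      + (\<Sum>g\<in>G. sqrt (real (card g) / (2 ^ k - 1)) * sqrt (\<Sum>v\<in>g. (c2 v)\<^sup>2)))"
    using A B assms by (intro add_mono mult_left_mono) auto
  then show ?thesis unfolding tsla_penalty_def by (simp add: algebra_simps)
qed



lemma final_alg:
  fixes n :: nat and lam Ph Ps PD S Q W0 :: real
  assumes n0: "n > 0" and lam0: "lam \<ge> 0"
    and opt: "1 / (2 * real n) * (W0 - 2 * S + Q) + lam * Ph \<le> 1 / (2 * real n) * W0 + lam * Ps"
    and SS: "S \<le> lam * real n * PD" and PD: "PD \<le> Ph + Ps"
  shows "1 / real n * Q \<le> 4 * lam * Ps"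
proof -
  have "(Q - 2 * S) / (2 * real n) \<le> lam * (Ps - Ph)"
    using opt by (simp add: algebra_simps add_divide_distrib diff_divide_distrib)
  then have "Q - 2 * S \<le> lam * (Ps - Ph) * (2 * real n)"
    using n0 by (simp add: pos_divide_le_eq)
  then have "Q \<le> 2 * S + 2 * real n * lam * (Ps - Ph)" by (simp add: algebra_simps)
  also have "\<dots> \<le> 2 * (lam * real n * (Ph + Ps)) + 2 * real n * lam * (Ps - Ph)"
    using SS PD lam0 n0 by (smt (verit) mult_left_mono of_nat_0_le_iff zero_le_mult_iff)
  also have "\<dots> = real n * (4 * lam * Ps)" by (simp add: algebra_simps)
  finally show ?thesis using n0 by (simp add: field_simps)
qed

lemma expand_obj:
  fixes \<omega> :: "nat \<Rightarrow> real"
  shows "(\<Sum>i<n. (((\<Sum>j<p. X i j * bs j) + \<omega> i) - (\<Sum>j<p. X i j * bh j))\<^sup>2)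
    = (\<Sum>i<n. (\<omega> i)\<^sup>2) - 2 * (\<Sum>i<n. \<omega> i * (\<Sum>j<p. X i j * (bh j - bs j)))
      + (\<Sum>i<n. ((\<Sum>j<p. X i j * bh j) - (\<Sum>j<p. X i j * bs j))\<^sup>2)"
proof -
  have d: "(\<Sum>j<p. X i j * (bh j - bs j)) = (\<Sum>j<p. X i j * bh j) - (\<Sum>j<p. X i j * bs j)" for i
    by (simp add: right_diff_distrib sum_subtractf)
  show ?thesis unfolding d
    by (simp add: power2_eq_square algebra_simps sum.distrib sum_subtractf sum_distrib_left)
qed



theorem theorem1:
  fixes n p k :: nat and \<sigma> \<alpha> lam :: real
    and X :: "nat \<Rightarrow> nat \<Rightarrow> real"
    and V :: "'v set" and r :: 'v and par :: "'v \<Rightarrow> 'v"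
    and A :: "nat \<Rightarrow> 'v \<Rightarrow> real" and G :: "'v set set"
    and \<beta>s :: "nat \<Rightarrow> real" and \<gamma>s :: "'v \<Rightarrow> real"
  assumes "n \<ge> 1" and "p \<ge> 2" and "k \<ge> 1" and "\<sigma> > 0"
    and X_bin: "\<forall>i<n. \<forall>j<p. X i j \<in> {0, 1}"
    and X_nz: "\<forall>j<p. \<exists>i<n. X i j \<noteq> 0"
    and tree: "rooted_tree V r par"
    and part: "is_partition G V"
    and hi: "\<forall>g\<in>G. card g \<le> 2 ^ k - 1"
    and hii: "card G \<le> p"
    and hiii: "\<forall>g\<in>G. \<forall>i<n. \<forall>v\<in>V.
                 (\<Sum>j<p. X i j * A j v * (if v \<in> g then 1 else 0)) \<in> {0, 1}"
    and beta_star: "\<forall>j<p. \<beta>s j = linmap V A \<gamma>s j"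
    and "0 \<le> \<alpha>" and "\<alpha> \<le> 1"
    and lam: "lam \<ge> 4 * sqrt (2 ^ k - 1) * \<sigma> * sqrt (ln (real p) / real n)"
  shows "\<exists>E \<in> sets (gaussian_vec n \<sigma>).
           measure (gaussian_vec n \<sigma>) E \<ge> 1 - 1 / real p - 2 / (real p)\<^sup>2 \<and>
           (\<forall>\<epsilon>\<in>E. \<forall>\<beta>h \<gamma>h.
              let y = (\<lambda>i. (\<Sum>j<p. X i j * \<beta>s j) + \<epsilon> i) in
              ((\<forall>j<p. \<beta>h j = linmap V A \<gamma>h j) \<and>
               (\<forall>\<beta> \<gamma>. (\<forall>j<p. \<beta> j = linmap V A \<gamma> j) \<longrightarrow>
                  tsla_objective n p k X G \<alpha> lam y \<beta>h \<gamma>h \<le> tsla_objective n p k X G \<alpha> lam y \<beta> \<gamma>))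
              \<longrightarrow> 1 / real n * (\<Sum>i<n. ((\<Sum>j<p. X i j * \<beta>h j) - (\<Sum>j<p. X i j * \<beta>s j))\<^sup>2)
                  \<le> 4 * lam * tsla_penalty n p k X G \<alpha> \<beta>s \<gamma>s)"
proof -
  define M where "M = gaussian_vec n \<sigma>"
  interpret P: prob_space M unfolding M_def by (rule gv_prob) fact
  have n0: "n > 0" using assms(1) by simp
  have p2: "real p \<ge> 2" using assms(2) by simp
  have sp: "\<sigma> > 0" by fact
  define K :: real where "K = 2 ^ k - 1"
  have K1: "K \<ge> 1" unfolding K_def using assms(3)
  proof -
    have "(2::real) ^ k \<ge> 2 ^ 1" using assms(3) by (intro power_increasing) auto
    then show "(2::real) ^ k - 1 \<ge> 1" by simp
  qed
  have lnp: "ln (real p) > 0" using p2 by simp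
  have lam_ge: "lam \<ge> 4 * sqrt K * \<sigma> * sqrt (ln (real p) / real n)" using lam by (simp add: K_def)
  have rhs0: "4 * sqrt K * \<sigma> * sqrt (ln (real p) / real n) \<ge> 0"
    using K1 sp lnp by (intro mult_nonneg_nonneg) auto
  have lam0: "lam \<ge> 0" using lam_ge rhs0 by linarith
  have lam2: "16 * K * \<sigma>\<^sup>2 * ln (real p) \<le> lam\<^sup>2 * real n"
  proof -
    have "(4 * sqrt K * \<sigma> * sqrt (ln (real p) / real n))\<^sup>2 \<le> lam\<^sup>2"
      using lam_ge rhs0 by (intro power_mono) auto
    moreover have "(4 * sqrt K * \<sigma> * sqrt (ln (real p) / real n))\<^sup>2 = 16 * K * \<sigma>\<^sup>2 * (ln (real p) / real n)"
      using K1 lnp n0 by (simp add: power_mult_distrib)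
    ultimately have "16 * K * \<sigma>\<^sup>2 * (ln (real p) / real n) \<le> lam\<^sup>2" by simp
    then show ?thesis using n0 by (simp add: field_simps)
  qed
  have lam2': "16 * \<sigma>\<^sup>2 * ln (real p) \<le> lam\<^sup>2 * real n / K"
  proof -
    have "16 * \<sigma>\<^sup>2 * ln (real p) * K \<le> lam\<^sup>2 * real n" using lam2 by (simp add: mult_ac)
    then show ?thesis using K1 by (simp add: field_simps)
  qed
  have lam2'': "16 * \<sigma>\<^sup>2 * ln (real p) \<le> lam\<^sup>2 * real n"
  proof -
    have "16 * \<sigma>\<^sup>2 * ln (real p) \<le> 16 * K * \<sigma>\<^sup>2 * ln (real p)"
      using K1 lnp by (simp add: mult_right_mono)
    then show ?thesis using lam2 by linarith
  qed
  have finV: "finite V" using tree unfolding rooted_tree_def by blast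
  have fG: "finite G" using part finV unfolding is_partition_def by (metis finite_UnionD)
  have fg: "\<And>g. g \<in> G \<Longrightarrow> finite g" using part finV unfolding is_partition_def by (meson finite_subset)
  have gne: "\<And>g. g \<in> G \<Longrightarrow> g \<noteq> {}" using part unfolding is_partition_def by blast
  have gV: "\<And>g. g \<in> G \<Longrightarrow> g \<subseteq> V" using part unfolding is_partition_def by blast
  have Vcov: "\<And>v. v \<in> V \<Longrightarrow> \<exists>g\<in>G. v \<in> g" using part unfolding is_partition_def by blast
  define sj where "sj j = (\<Sum>i<n. (X i j)\<^sup>2)" for j
  have sj_pos: "sj j > 0" if jp: "j < p" for j
  proof -
    obtain i where i: "i < n" "X i j \<noteq> 0" using X_nz jp by blast
    show ?thesis unfolding sj_def using i by (intro sum_pos2[of _ i]) auto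
  qed
  define C where "C i v = (\<Sum>j<p. X i j * A j v)" for i v
  have Cbin: "C i v \<in> {0, 1}" if vi: "v \<in> V" "i < n" for i v
  proof -
    obtain g where g: "g \<in> G" "v \<in> g" using Vcov vi by blast
    have "(\<Sum>j<p. X i j * A j v * (if v \<in> g then 1 else 0)) \<in> {0, 1}" using hiii g vi by blast
    then show ?thesis using g by (simp add: C_def)
  qed
  have Cn: "(\<Sum>i<n. (C i v)\<^sup>2) \<le> real n" if "v \<in> V" for v
  proof -
    have "(\<Sum>i<n. (C i v)\<^sup>2) \<le> (\<Sum>i<n. 1)"
    proof (rule sum_mono)
      fix i assume "i \<in> {..<n}"
      then have "C i v = 0 \<or> C i v = 1" using Cbin[OF that] by auto
      then show "(C i v)\<^sup>2 \<le> 1" by auto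
    qed
    then show ?thesis by simp
  qed
  define e where "e j \<omega> = exp ((\<Sum>i<n. X i j * \<omega> i)\<^sup>2 / (4 * \<sigma>\<^sup>2 * sj j))" for j and \<omega> :: "nat \<Rightarrow> real"
  define f where "f v \<omega> = exp ((\<Sum>i<n. C i v * \<omega> i)\<^sup>2 / (4 * \<sigma>\<^sup>2 * real n))" for v and \<omega> :: "nat \<Rightarrow> real"
  define \<Phi> where "\<Phi> \<omega> = (\<Sum>j<p. e j \<omega>) + (\<Sum>g\<in>G. (\<Sum>v\<in>g. f v \<omega>) / real (card g))" for \<omega>
  have e_int: "integrable M (e j) \<and> integral\<^sup>L M (e j) \<le> sqrt 2" if "j < p" for j
    unfolding M_def e_def[abs_def] using sj_pos[OF that]
    by (intro gv_int sp) (auto simp: sj_def)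
  have f_int: "integrable M (f v) \<and> integral\<^sup>L M (f v) \<le> sqrt 2" if "v \<in> V" for v
    unfolding M_def f_def[abs_def] using n0 Cn[OF that]
    by (intro gv_int sp) auto
  have gvV: "v \<in> V" if "g \<in> G" "v \<in> g" for g v using gV that by blast
  have ei: "integrable M (e j)" if "j < p" for j using e_int that by blast
  have fi: "integrable M (f v)" if "v \<in> V" for v using f_int that by blast
  have gi: "integrable M (\<lambda>\<omega>. (\<Sum>v\<in>g. f v \<omega>) / real (card g))" if "g \<in> G" for g
    using fi gvV that by (intro integrable_divide_zero Bochner_Integration.integrable_sum) blast
  have \<Phi>_int: "integrable M \<Phi>"
    unfolding \<Phi>_def[abs_def]
    using ei gi by (intro Bochner_Integration.integrable_add integrable_sum) auto
  have \<Phi>_le: "integral\<^sup>L M \<Phi> \<le> 2 * real p * sqrt 2"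
  proof -
    have "integral\<^sup>L M \<Phi> = (\<Sum>j<p. integral\<^sup>L M (e j)) + (\<Sum>g\<in>G. (\<Sum>v\<in>g. integral\<^sup>L M (f v)) / real (card g))"
    proof -
      have iA: "integrable M (\<lambda>\<omega>. \<Sum>j<p. e j \<omega>)" using ei by (intro Bochner_Integration.integrable_sum) auto
      have iB: "integrable M (\<lambda>\<omega>. \<Sum>g\<in>G. (\<Sum>v\<in>g. f v \<omega>) / real (card g))" using gi by (intro Bochner_Integration.integrable_sum) auto
      have "integral\<^sup>L M \<Phi> = integral\<^sup>L M (\<lambda>\<omega>. \<Sum>j<p. e j \<omega>) + integral\<^sup>L M (\<lambda>\<omega>. \<Sum>g\<in>G. (\<Sum>v\<in>g. f v \<omega>) / real (card g))"
        unfolding \<Phi>_def[abs_def] by (rule Bochner_Integration.integral_add[OF iA iB])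
      also have "integral\<^sup>L M (\<lambda>\<omega>. \<Sum>j<p. e j \<omega>) = (\<Sum>j<p. integral\<^sup>L M (e j))"
        using ei by (intro Bochner_Integration.integral_sum) auto
      also have "integral\<^sup>L M (\<lambda>\<omega>. \<Sum>g\<in>G. (\<Sum>v\<in>g. f v \<omega>) / real (card g))
          = (\<Sum>g\<in>G. integral\<^sup>L M (\<lambda>\<omega>. (\<Sum>v\<in>g. f v \<omega>) / real (card g)))"
        using gi by (intro Bochner_Integration.integral_sum) auto
      also have "\<dots> = (\<Sum>g\<in>G. (\<Sum>v\<in>g. integral\<^sup>L M (f v)) / real (card g))"
      proof (intro sum.cong refl)
        fix g assume g: "g \<in> G"
        have "integral\<^sup>L M (\<lambda>\<omega>. (\<Sum>v\<in>g. f v \<omega>) / real (card g)) = integral\<^sup>L M (\<lambda>\<omega>. \<Sum>v\<in>g. f v \<omega>) / real (card g)"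
          by (rule Bochner_Integration.integral_divide_zero)
        also have "integral\<^sup>L M (\<lambda>\<omega>. \<Sum>v\<in>g. f v \<omega>) = (\<Sum>v\<in>g. integral\<^sup>L M (f v))"
          using fi gvV g by (intro Bochner_Integration.integral_sum) blast
        finally show "integral\<^sup>L M (\<lambda>\<omega>. (\<Sum>v\<in>g. f v \<omega>) / real (card g)) = (\<Sum>v\<in>g. integral\<^sup>L M (f v)) / real (card g)" .
      qed
      finally show ?thesis .
    qed
    also have "\<dots> \<le> (\<Sum>j<p. sqrt 2) + (\<Sum>g\<in>G. (\<Sum>v\<in>g. sqrt 2) / real (card g))"
      using e_int f_int gvV
      by (intro add_mono sum_mono divide_right_mono) auto
    also have "(\<Sum>g\<in>G. (\<Sum>v\<in>g. sqrt 2) / real (card g)) = (\<Sum>g\<in>G. sqrt 2)"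
      using fg gne by (intro sum.cong refl) (simp add: card_gt_0_iff)
    also have "(\<Sum>j<p. sqrt 2) + (\<Sum>g\<in>G. sqrt (2::real)) = real p * sqrt 2 + real (card G) * sqrt 2"
      by simp
    also have "\<dots> \<le> 2 * real p * sqrt 2" using hii by (simp add: mult_right_mono)
    finally show ?thesis .
  qed
  have \<Phi>_meas[measurable]: "\<Phi> \<in> borel_measurable M" using \<Phi>_int by (rule borel_measurable_integrable)
  have e_nn: "e j \<omega> \<ge> 0" for j \<omega> by (simp add: e_def)
  have f_nn: "f v \<omega> \<ge> 0" for v \<omega> by (simp add: f_def)
  have \<Phi>_nn: "\<Phi> \<omega> \<ge> 0" for \<omega> unfolding \<Phi>_def
    using e_nn f_nn by (intro add_nonneg_nonneg sum_nonneg divide_nonneg_nonneg) auto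
  define B where "B = {\<omega>\<in>space M. \<Phi> \<omega> \<ge> real p ^ 4}"
  define E where "E = {\<omega>\<in>space M. \<Phi> \<omega> < real p ^ 4}"
  have B_ev: "B \<in> P.events" unfolding B_def by measurable
  have E_ev: "E \<in> P.events" unfolding E_def by measurable
  have EB: "E = space M - B" unfolding E_def B_def by auto
  have pB: "P.prob B \<le> 2 * real p * sqrt 2 / real p ^ 4"
  proof -
    have "P.prob B \<le> integral\<^sup>L M \<Phi> / real p ^ 4"
      unfolding B_def using p2 \<Phi>_nn
      by (intro integral_Markov_inequality_measure[OF \<Phi>_int, of "space M"]) auto
    also have "\<dots> \<le> 2 * real p * sqrt 2 / real p ^ 4"
      using \<Phi>_le p2 by (intro divide_right_mono) auto
    finally show ?thesis .
  qed
  have num: "2 * real p * sqrt 2 / real p ^ 4 \<le> 1 / real p + 2 / (real p)\<^sup>2"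
  proof -
    have s2: "sqrt 2 \<le> (2::real)" using real_sqrt_le_mono[of 2 4] by (simp add: real_sqrt_four)
    have "2 * real p * sqrt 2 \<le> 2 * real p * 2" using s2 p2 by (intro mult_left_mono) auto
    also have "\<dots> \<le> real p ^ 3"
    proof -
      have "4 \<le> real p * real p" using mult_mono[OF p2 p2] by simp
      then have "real p * 4 \<le> real p * (real p * real p)" using p2 by (intro mult_left_mono) auto
      then show ?thesis by (simp add: power3_eq_cube mult_ac)
    qed
    finally have "2 * real p * sqrt 2 \<le> real p ^ 3" .
    then have "2 * real p * sqrt 2 / real p ^ 4 \<le> real p ^ 3 / real p ^ 4"
      using p2 by (intro divide_right_mono) auto
    also have "real p ^ 3 / real p ^ 4 = 1 / real p" using p2 by (simp add: power_eq_if)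
    also have "\<dots> \<le> 1 / real p + 2 / (real p)\<^sup>2" by simp
    finally show ?thesis .
  qed
  have probE: "measure M E \<ge> 1 - 1 / real p - 2 / (real p)\<^sup>2"
  proof -
    have "measure M E = 1 - P.prob B" unfolding EB using B_ev by (rule P.prob_compl)
    then show ?thesis using pB num by linarith
  qed
  have det: "\<forall>\<epsilon>\<in>E. \<forall>\<beta>h \<gamma>h.
              let y = (\<lambda>i. (\<Sum>j<p. X i j * \<beta>s j) + \<epsilon> i) in
              ((\<forall>j<p. \<beta>h j = linmap V A \<gamma>h j) \<and>
               (\<forall>\<beta> \<gamma>. (\<forall>j<p. \<beta> j = linmap V A \<gamma> j) \<longrightarrow>
                  tsla_objective n p k X G \<alpha> lam y \<beta>h \<gamma>h \<le> tsla_objective n p k X G \<alpha> lam y \<beta> \<gamma>))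
              \<longrightarrow> 1 / real n * (\<Sum>i<n. ((\<Sum>j<p. X i j * \<beta>h j) - (\<Sum>j<p. X i j * \<beta>s j))\<^sup>2)
                  \<le> 4 * lam * tsla_penalty n p k X G \<alpha> \<beta>s \<gamma>s"
    unfolding Let_def
  proof (intro ballI allI impI, elim conjE)
    fix \<omega> \<beta>h \<gamma>h
    assume \<omega>E: "\<omega> \<in> E" and linh: "\<forall>j<p. \<beta>h j = linmap V A \<gamma>h j"
      and opt: "\<forall>\<beta> \<gamma>. (\<forall>j<p. \<beta> j = linmap V A \<gamma> j) \<longrightarrow>
                  tsla_objective n p k X G \<alpha> lam (\<lambda>i. (\<Sum>j<p. X i j * \<beta>s j) + \<omega> i) \<beta>h \<gamma>h
                  \<le> tsla_objective n p k X G \<alpha> lam (\<lambda>i. (\<Sum>j<p. X i j * \<beta>s j) + \<omega> i) \<beta> \<gamma>"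
    have \<Phi>\<omega>: "\<Phi> \<omega> < real p ^ 4" using \<omega>E by (simp add: E_def)
    have pp: "real p > 0" using p2 by simp
    have lnp4: "ln (real p ^ 4) = 4 * ln (real p)" using pp by (simp add: ln_realpow)
    have A1: "(\<Sum>j<p. e j \<omega>) \<le> \<Phi> \<omega>"
      unfolding \<Phi>_def using f_nn by (simp add: sum_nonneg divide_nonneg_nonneg)
    have A2: "(\<Sum>g\<in>G. (\<Sum>v\<in>g. f v \<omega>) / real (card g)) \<le> \<Phi> \<omega>"
      unfolding \<Phi>_def using e_nn by (simp add: sum_nonneg)
    have small: "x < 4 * ln (real p)" if "exp x < real p ^ 4" for x
    proof -
      have "ln (exp x) < ln (real p ^ 4)" using that pp by (subst ln_less_cancel_iff) auto
      then show ?thesis using lnp4 by simp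
    qed
    have Hj: "\<forall>j<p. \<bar>\<Sum>i<n. X i j * \<omega> i\<bar> \<le> lam * real n * (col_norm n X j / sqrt (real n))"
    proof (intro allI impI)
      fix j assume jp: "j < p"
      define Z where "Z = (\<Sum>i<n. X i j * \<omega> i)"
      have "e j \<omega> \<le> (\<Sum>j<p. e j \<omega>)" using jp e_nn by (intro member_le_sum) auto
      then have "e j \<omega> < real p ^ 4" using A1 \<Phi>\<omega> by linarith
      then have "Z\<^sup>2 / (4 * \<sigma>\<^sup>2 * sj j) < 4 * ln (real p)" unfolding e_def Z_def by (rule small)
      then have "Z\<^sup>2 < 4 * ln (real p) * (4 * \<sigma>\<^sup>2 * sj j)"
        using sj_pos[OF jp] sp by (simp add: divide_less_eq)
      also have "\<dots> = (16 * \<sigma>\<^sup>2 * ln (real p)) * sj j" by simp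
      also have "\<dots> \<le> (lam\<^sup>2 * real n) * sj j"
        using lam2'' sj_pos[OF jp] by (intro mult_right_mono) auto
      finally have Z2: "Z\<^sup>2 \<le> lam\<^sup>2 * real n * sj j" by simp
      have R2: "(lam * real n * (col_norm n X j / sqrt (real n)))\<^sup>2 = lam\<^sup>2 * real n * sj j"
        using n0 sj_pos[OF jp] unfolding col_norm_def sj_def[symmetric]
        by (simp add: power_mult_distrib power_divide power2_eq_square)
      have R0: "lam * real n * (col_norm n X j / sqrt (real n)) \<ge> 0"
        using lam0 unfolding col_norm_def by (intro mult_nonneg_nonneg divide_nonneg_nonneg) (auto simp: sum_nonneg)
      show "\<bar>\<Sum>i<n. X i j * \<omega> i\<bar> \<le> lam * real n * (col_norm n X j / sqrt (real n))"
        using power2_le_imp_le[of "\<bar>Z\<bar>" "lam * real n * (col_norm n X j / sqrt (real n))"] Z2 R2 R0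
        unfolding Z_def by simp
    qed
    have Hg: "\<forall>g\<in>G. sqrt (\<Sum>v\<in>g. (\<Sum>i<n. (\<Sum>j<p. X i j * A j v) * \<omega> i)\<^sup>2)
               \<le> lam * real n * sqrt (real (card g) / (2 ^ k - 1))"
    proof
      fix g assume gG: "g \<in> G"
      define W where "W v = (\<Sum>i<n. C i v * \<omega> i)" for v
      define cg where "cg = real (card g)"
      have cg0: "cg > 0" using fg[OF gG] gne[OF gG] by (simp add: cg_def card_gt_0_iff)
      have "(\<Sum>v\<in>g. f v \<omega>) / real (card g) \<le> (\<Sum>g\<in>G. (\<Sum>v\<in>g. f v \<omega>) / real (card g))"
        using gG f_nn fG by (intro member_le_sum) (auto intro!: divide_nonneg_nonneg sum_nonneg)
      then have avg: "(\<Sum>v\<in>g. f v \<omega>) / cg < real p ^ 4" unfolding cg_def using A2 \<Phi>\<omega> by linarith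
      define y where "y v = (W v)\<^sup>2 / (4 * \<sigma>\<^sup>2 * real n)" for v
      have "exp (\<Sum>v\<in>g. (1 / cg) *\<^sub>R y v) \<le> (\<Sum>v\<in>g. (1 / cg) * exp (y v))"
        using cg0
        by (intro convex_on_sum[OF fg[OF gG] gne[OF gG] exp_convex]) (auto simp: cg_def card_gt_0_iff)
      also have "\<dots> = (\<Sum>v\<in>g. f v \<omega>) / cg"
        by (simp add: f_def y_def W_def sum_divide_distrib)
      finally have "exp (\<Sum>v\<in>g. (1 / cg) *\<^sub>R y v) < real p ^ 4" using avg by linarith
      then have "(\<Sum>v\<in>g. (1 / cg) *\<^sub>R y v) < 4 * ln (real p)" by (rule small)
      moreover have "(\<Sum>v\<in>g. (1 / cg) *\<^sub>R y v) = (\<Sum>v\<in>g. (W v)\<^sup>2) / (4 * \<sigma>\<^sup>2 * real n * cg)"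
        by (simp add: y_def sum_divide_distrib[symmetric] sum_distrib_left[symmetric])
      ultimately have "(\<Sum>v\<in>g. (W v)\<^sup>2) < 4 * ln (real p) * (4 * \<sigma>\<^sup>2 * real n * cg)"
        using cg0 sp n0 by (simp add: divide_less_eq)
      also have "\<dots> = (16 * \<sigma>\<^sup>2 * ln (real p)) * (real n * cg)" by simp
      also have "\<dots> \<le> (lam\<^sup>2 * real n / K) * (real n * cg)"
        using lam2' cg0 n0 by (intro mult_right_mono) auto
      finally have W2: "(\<Sum>v\<in>g. (W v)\<^sup>2) \<le> (lam * real n)\<^sup>2 * (cg / K)"
        by (simp add: power_mult_distrib power2_eq_square mult_ac)
      have "sqrt (\<Sum>v\<in>g. (W v)\<^sup>2) \<le> sqrt ((lam * real n)\<^sup>2 * (cg / K))"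
        using W2 by (rule real_sqrt_le_mono)
      also have "\<dots> = lam * real n * sqrt (cg / K)"
        using lam0 unfolding real_sqrt_mult[of "(lam * real n)\<^sup>2" "cg / K"] real_sqrt_abs by simp
      finally show "sqrt (\<Sum>v\<in>g. (\<Sum>i<n. (\<Sum>j<p. X i j * A j v) * \<omega> i)\<^sup>2)
               \<le> lam * real n * sqrt (real (card g) / (2 ^ k - 1))"
        by (simp add: W_def C_def cg_def K_def)
    qed
    have linD: "\<forall>j<p. \<beta>h j - \<beta>s j = linmap V A (\<lambda>v. \<gamma>h v - \<gamma>s v) j"
      using linh beta_star by (simp add: linmap_def right_diff_distrib sum_subtractf)
    have SS: "(\<Sum>i<n. \<omega> i * (\<Sum>j<p. X i j * (\<beta>h j - \<beta>s j)))
        \<le> lam * real n * tsla_penalty n p k X G \<alpha> (\<lambda>j. \<beta>h j - \<beta>s j) (\<lambda>v. \<gamma>h v - \<gamma>s v)"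
      using det_cross[OF finV part n0 lam0 assms(13) assms(14) Hj Hg linD] by simp
    have PD: "tsla_penalty n p k X G \<alpha> (\<lambda>j. \<beta>h j - \<beta>s j) (\<lambda>v. \<gamma>h v - \<gamma>s v)
        \<le> tsla_penalty n p k X G \<alpha> \<beta>h \<gamma>h + tsla_penalty n p k X G \<alpha> \<beta>s \<gamma>s"
      by (rule pen_tri[OF assms(13) assms(14)])
    have o: "tsla_objective n p k X G \<alpha> lam (\<lambda>i. (\<Sum>j<p. X i j * \<beta>s j) + \<omega> i) \<beta>h \<gamma>h
                  \<le> tsla_objective n p k X G \<alpha> lam (\<lambda>i. (\<Sum>j<p. X i j * \<beta>s j) + \<omega> i) \<beta>s \<gamma>s"
      using opt beta_star by blast
    have o2: "1 / (2 * real n) * ((\<Sum>i<n. (\<omega> i)\<^sup>2) - 2 * (\<Sum>i<n. \<omega> i * (\<Sum>j<p. X i j * (\<beta>h j - \<beta>s j)))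
      + (\<Sum>i<n. ((\<Sum>j<p. X i j * \<beta>h j) - (\<Sum>j<p. X i j * \<beta>s j))\<^sup>2)) + lam * tsla_penalty n p k X G \<alpha> \<beta>h \<gamma>h
      \<le> 1 / (2 * real n) * (\<Sum>i<n. (\<omega> i)\<^sup>2) + lam * tsla_penalty n p k X G \<alpha> \<beta>s \<gamma>s"
      using o unfolding tsla_objective_def expand_obj by simp
    show "1 / real n * (\<Sum>i<n. ((\<Sum>j<p. X i j * \<beta>h j) - (\<Sum>j<p. X i j * \<beta>s j))\<^sup>2)
                  \<le> 4 * lam * tsla_penalty n p k X G \<alpha> \<beta>s \<gamma>s"
      by (rule final_alg[OF n0 lam0 o2 SS PD])
  qed
  show ?thesis using E_ev probE det unfolding M_def by blast
qed

end
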